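(* Let $\mathbf{n} > 3\mathbf{f}\ge 0$ be integers. For two transaction digests $d_1,d_2$, let $d_j.ois^C$ denote the set of ordering indicators assigned to $d_j$ by correct replicas, and suppose every element of $d_1.ois^C$ is strictly smaller than every element of $d_2.ois^C$. For $j=1,2$, let $S_j$ be a collection of ordering indicators for $d_j$, one from each replica of a set $Q_j$ of at least $\mathbf{n}-\mathbf{f}$ distinct replicas, at most $\mathbf{f}$ of which are Byzantine (arbitrary values), with every value from a correct replica of $Q_j$ lying in $d_j.ois^C$; and let $d_j.AOI$ be the $(\mathbf{f}+1)$-th smallest value of $S_j$. Then $d_1.AOI < d_2.AOI$. (Consequently, since the protocol orders transactions in increasing order of $AOI$, the transaction with digest $d_1$ is ordered before the one with digest $d_2$.)
   Context: Setting: $\mathbf{n}$ replicas, at most $\mathbf{f}$ Byzantine; each replica assigns a numerical ordering indicator to each transaction it receives, correct replicas honestly, Byzantine replicas arbitrarily. The assigned ordering indicator $AOI$ of a transaction is the $(\mathbf{f}+1)$-th smallest value in a committed collection of at least $\mathbf{n}-\mathbf{f}$ ordering indicators for it (at most one per replica). Ordering Linearizability: if all correct ordering indicators of $T_1$ are smaller than all correct ordering indicators of $T_2$, then $T_1$ is ordered before $T_2$. *)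

theory Defs
  imports Complex_Main "HOL-Library.Multiset"
begin

definition kth_smallest :: "nat \<Rightarrow> real multiset \<Rightarrow> real" where
  "kth_smallest k M = sorted_list_of_multiset M ! (k - 1)"

definition AOI :: "nat \<Rightarrow> 'r set \<Rightarrow> ('r \<Rightarrow> real) \<Rightarrow> real" where
  "AOI f Q v = kth_smallest (f + 1) (image_mset v (mset_set Q))"

end

theory Submission
  imports Defs
begin

lemma take_le_filter:
  fixes xs :: "real list"
  assumes "sorted xs" "k < length xs"
  shows "k + 1 \<le> size (filter_mset (\<lambda>x. x \<le> xs ! k) (mset xs))"
proof -
  have all: "\<forall>y\<in>set (take (k+1) xs). y \<le> xs ! k"
    using assms by (auto simp: in_set_conv_nth sorted_iff_nth_mono)
  have "mset (take (k+1) xs) = filter_mset (\<lambda>x. x \<le> xs ! k) (mset (take (k+1) xs))"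
    using all by (metis (mono_tags, lifting) filter_True mset_filter)
  also have "\<dots> \<subseteq># filter_mset (\<lambda>x. x \<le> xs ! k) (mset xs)"
    apply (rule multiset_filter_mono)
    by (metis append_take_drop_id mset_append mset_subset_eq_add_left)
  finally have "size (mset (take (k+1) xs)) \<le> size (filter_mset (\<lambda>x. x \<le> xs ! k) (mset xs))"
    by (rule size_mset_mono)
  thus ?thesis using assms by simp
qed

lemma drop_ge_filter:
  fixes xs :: "real list"
  assumes "sorted xs" "k < length xs"
  shows "length xs - k \<le> size (filter_mset (\<lambda>x. xs ! k \<le> x) (mset xs))"
proof -
  have all: "\<forall>y\<in>set (drop k xs). xs ! k \<le> y"
    using assms by (auto simp: in_set_conv_nth sorted_iff_nth_mono)
  have "mset (drop k xs) = filter_mset (\<lambda>x. xs ! k \<le> x) (mset (drop k xs))"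
    using all by (metis (mono_tags, lifting) filter_True mset_filter)
  also have "\<dots> \<subseteq># filter_mset (\<lambda>x. xs ! k \<le> x) (mset xs)"
    apply (rule multiset_filter_mono)
    by (metis append_take_drop_id mset_append mset_subset_eq_add_right)
  finally have "size (mset (drop k xs)) \<le> size (filter_mset (\<lambda>x. xs ! k \<le> x) (mset xs))"
    by (rule size_mset_mono)
  thus ?thesis using assms by simp
qed

lemma size_filter_image:
  assumes "finite Q"
  shows "size (filter_mset P (image_mset v (mset_set Q))) = card {r\<in>Q. P (v r)}"
proof -
  have "filter_mset P (image_mset v (mset_set Q)) = image_mset v (filter_mset (\<lambda>r. P (v r)) (mset_set Q))"
    by (simp add: filter_mset_image_mset)
  also have "filter_mset (\<lambda>r. P (v r)) (mset_set Q) = mset_set {r\<in>Q. P (v r)}"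
    using assms by (simp add: filter_mset_mset_set)
  finally show ?thesis using assms by simp
qed

lemma exists_good:
  assumes "finite Q" "card {r\<in>Q. P r} \<ge> f + 1" "finite B" "card B \<le> f"
  shows "\<exists>r\<in>Q - B. P r"
proof (rule ccontr)
  assume "\<not> ?thesis"
  hence "{r\<in>Q. P r} \<subseteq> B" by auto
  hence "card {r\<in>Q. P r} \<le> card B" using assms(3) by (rule card_mono[rotated])
  thus False using assms by simp
qed

lemma aoi_bounds:
  fixes v :: "'r \<Rightarrow> real"
  assumes "finite Q" "card Q \<ge> 2 * f + 1" "finite B" "card B \<le> f"
  shows "\<exists>r\<in>Q - B. v r \<le> AOI f Q v" and "\<exists>r\<in>Q - B. AOI f Q v \<le> v r"
proof -
  define M where "M = image_mset v (mset_set Q)"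
  define xs where "xs = sorted_list_of_multiset M"
  have s: "sorted xs" unfolding xs_def by simp
  have mx: "mset xs = M" unfolding xs_def by simp
  have len: "length xs = card Q"
    by (metis mx size_mset M_def size_image_mset size_mset_set)
  have a: "AOI f Q v = xs ! f" unfolding AOI_def kth_smallest_def xs_def M_def by simp
  have k: "f < length xs" using len assms by simp
  have "f + 1 \<le> card {r\<in>Q. v r \<le> xs ! f}"
    using take_le_filter[OF s k] size_filter_image[OF assms(1), of "\<lambda>x. x \<le> xs ! f" v]
    by (simp add: mx M_def)
  from exists_good[OF assms(1) this assms(3,4)] show "\<exists>r\<in>Q - B. v r \<le> AOI f Q v" using a by simp
  have "f + 1 \<le> card {r\<in>Q. xs ! f \<le> v r}"
    using drop_ge_filter[OF s k] size_filter_image[OF assms(1), of "\<lambda>x. xs ! f \<le> x" v] len assms(2)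
    by (simp add: mx M_def)
  from exists_good[OF assms(1) this assms(3,4)] show "\<exists>r\<in>Q - B. AOI f Q v \<le> v r" using a by simp
qed

theorem mainTheorem2:
  fixes n f :: nat
    and Rep Byz Q1 Q2 :: "'r set"
    and C1 C2 :: "real set"
    and v1 v2 :: "'r \<Rightarrow> real"
  assumes "n > 3 * f"
    and "finite Rep" and "card Rep = n"
    and "Byz \<subseteq> Rep" and "card Byz \<le> f"
    and "\<forall>x\<in>C1. \<forall>y\<in>C2. x < y"
    and "Q1 \<subseteq> Rep" and "card Q1 \<ge> n - f"
    and "\<forall>r\<in>Q1 - Byz. v1 r \<in> C1"
    and "Q2 \<subseteq> Rep" and "card Q2 \<ge> n - f"
    and "\<forall>r\<in>Q2 - Byz. v2 r \<in> C2"
  shows "AOI f Q1 v1 < AOI f Q2 v2"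
proof -
  have fB: "finite Byz" using assms(2,4) finite_subset by blast
  have f1: "finite Q1" using assms(2,7) finite_subset by blast
  have f2: "finite Q2" using assms(2,10) finite_subset by blast
  have c1: "card Q1 \<ge> 2 * f + 1" using assms(1,8) by linarith
  have c2: "card Q2 \<ge> 2 * f + 1" using assms(1,11) by linarith
  obtain r1 where r1: "r1 \<in> Q1 - Byz" "AOI f Q1 v1 \<le> v1 r1"
    using aoi_bounds(2)[OF f1 c1 fB assms(5)] by blast
  obtain r2 where r2: "r2 \<in> Q2 - Byz" "v2 r2 \<le> AOI f Q2 v2"
    using aoi_bounds(1)[OF f2 c2 fB assms(5)] by blast
  have "v1 r1 < v2 r2" using assms(6,9,12) r1(1) r2(1) by blast
  thus ?thesis using r1(2) r2(2) by linarith
qed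

end
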